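(* Let $C$ be a right cancellative Möbius category and $R$ a commutative ring with identity. The relation on $C_1$ given by $f\le g$ iff $g=hf$ for some morphism $h$ is a partial order, and the convolution algebra $([C_1,R],\star)$ is isomorphic to the subalgebra of the incidence algebra $[\mathbb{I}_{(C_1,\le)},R]$ consisting of those $\alpha$ with $\alpha[f,gf]=\alpha[1_{tf},g]$ for all composable $f,g$, via the map sending $\beta\in[C_1,R]$ to $\widehat{\beta}$ with $\widehat{\beta}[f,hf]=\beta(h)$.
   Context: $C_1$ is the set of morphisms; $tf$ denotes the target of $f$. A category is Möbius if each morphism $f$ has finitely many proper decompositions (tuples $(f_1,\dots,f_n)$ with $f_n\cdots f_1=f$ and, for $n\ge2$, no $f_i$ an identity). $C$ is right cancellative if $gf=hf$ implies $g=h$. The convolution algebra $[C_1,R]$ has product $(\alpha\star\beta)(f)=\sum_{f_2f_1=f}\alpha(f_1)\beta(f_2)$. The incidence algebra of a locally finite poset $P$ consists of maps on intervals $[a,c]$ ($a\le c$) with $(f\star g)[a,c]=\sum_{a\le b\le c}f[a,b]g[b,c]$. *)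

theory Defs
  imports Main
begin

text \<open>A (small) category presented by its morphisms (all elements of type 'm),
  objects (all elements of type 'o), source s, target t, identities e and
  partial composition cmp g f (meaningful when t f = s g; written g f).\<close>

definition category :: "('m \<Rightarrow> 'o) \<Rightarrow> ('m \<Rightarrow> 'o) \<Rightarrow> ('o \<Rightarrow> 'm) \<Rightarrow> ('m \<Rightarrow> 'm \<Rightarrow> 'm) \<Rightarrow> bool" where
  "category s t e cmp \<longleftrightarrow>
     (\<forall>x. s (e x) = x \<and> t (e x) = x) \<and>
     (\<forall>f g. t f = s g \<longrightarrow> s (cmp g f) = s f \<and> t (cmp g f) = t g) \<and>
     (\<forall>f. cmp (e (t f)) f = f \<and> cmp f (e (s f)) = f) \<and>
     (\<forall>f g h. t f = s g \<longrightarrow> t g = s h \<longrightarrow> cmp h (cmp g f) = cmp (cmp h g) f)"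

definition is_identity :: "('m \<Rightarrow> 'o) \<Rightarrow> ('o \<Rightarrow> 'm) \<Rightarrow> 'm \<Rightarrow> bool" where
  "is_identity s e f \<longleftrightarrow> (\<exists>x. f = e x)"

fun comp_list :: "('m \<Rightarrow> 'm \<Rightarrow> 'm) \<Rightarrow> 'm list \<Rightarrow> 'm" where
  "comp_list cmp [f] = f"
| "comp_list cmp (f # g # fs) = comp_list cmp (cmp g f # fs)"
| "comp_list cmp [] = undefined"

definition composable_list :: "('m \<Rightarrow> 'o) \<Rightarrow> ('m \<Rightarrow> 'o) \<Rightarrow> 'm list \<Rightarrow> bool" where
  "composable_list s t fs \<longleftrightarrow> (\<forall>i. Suc i < length fs \<longrightarrow> t (fs ! i) = s (fs ! Suc i))"

definition proper_decomps :: "('m \<Rightarrow> 'o) \<Rightarrow> ('m \<Rightarrow> 'o) \<Rightarrow> ('o \<Rightarrow> 'm) \<Rightarrow> ('m \<Rightarrow> 'm \<Rightarrow> 'm) \<Rightarrow> 'm \<Rightarrow> 'm list set" where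
  "proper_decomps s t e cmp f = {fs. fs \<noteq> [] \<and> composable_list s t fs \<and> comp_list cmp fs = f \<and>
      (length fs \<ge> 2 \<longrightarrow> (\<forall>g \<in> set fs. \<not> is_identity s e g))}"

definition moebius_category :: "('m \<Rightarrow> 'o) \<Rightarrow> ('m \<Rightarrow> 'o) \<Rightarrow> ('o \<Rightarrow> 'm) \<Rightarrow> ('m \<Rightarrow> 'm \<Rightarrow> 'm) \<Rightarrow> bool" where
  "moebius_category s t e cmp \<longleftrightarrow> category s t e cmp \<and> (\<forall>f. finite (proper_decomps s t e cmp f))"

definition right_cancellative :: "('m \<Rightarrow> 'o) \<Rightarrow> ('m \<Rightarrow> 'o) \<Rightarrow> ('m \<Rightarrow> 'm \<Rightarrow> 'm) \<Rightarrow> bool" where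
  "right_cancellative s t cmp \<longleftrightarrow>
     (\<forall>f g h. t f = s g \<longrightarrow> t f = s h \<longrightarrow> cmp g f = cmp h f \<longrightarrow> g = h)"

definition conv :: "('m \<Rightarrow> 'o) \<Rightarrow> ('m \<Rightarrow> 'o) \<Rightarrow> ('m \<Rightarrow> 'm \<Rightarrow> 'm) \<Rightarrow> ('m \<Rightarrow> 'r::comm_ring_1) \<Rightarrow> ('m \<Rightarrow> 'r) \<Rightarrow> 'm \<Rightarrow> 'r" where
  "conv s t cmp \<alpha> \<beta> f = (\<Sum>(f1, f2) \<in> {(f1, f2). t f1 = s f2 \<and> cmp f2 f1 = f}. \<alpha> f1 * \<beta> f2)"

definition conv_unit :: "('o \<Rightarrow> 'm) \<Rightarrow> 'm \<Rightarrow> 'r::comm_ring_1" where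
  "conv_unit e f = (if \<exists>x. f = e x then 1 else 0)"

definition mle :: "('m \<Rightarrow> 'o) \<Rightarrow> ('m \<Rightarrow> 'o) \<Rightarrow> ('m \<Rightarrow> 'm \<Rightarrow> 'm) \<Rightarrow> 'm \<Rightarrow> 'm \<Rightarrow> bool" where
  "mle s t cmp f g \<longleftrightarrow> (\<exists>h. t f = s h \<and> g = cmp h f)"

text \<open>Incidence algebra of a locally finite poset (P, le): functions on intervals
  [a,c], a \<le> c, represented as functions vanishing off intervals.\<close>
definition incidence_algebra :: "('a \<Rightarrow> 'a \<Rightarrow> bool) \<Rightarrow> ('a \<Rightarrow> 'a \<Rightarrow> 'r::comm_ring_1) set" where
  "incidence_algebra le = {F. \<forall>a c. \<not> le a c \<longrightarrow> F a c = 0}"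

definition inc_mult :: "('a \<Rightarrow> 'a \<Rightarrow> bool) \<Rightarrow> ('a \<Rightarrow> 'a \<Rightarrow> 'r::comm_ring_1) \<Rightarrow> ('a \<Rightarrow> 'a \<Rightarrow> 'r) \<Rightarrow> 'a \<Rightarrow> 'a \<Rightarrow> 'r" where
  "inc_mult le F G a c = (if le a c then (\<Sum>b \<in> {b. le a b \<and> le b c}. F a b * G b c) else 0)"

definition inc_unit :: "('a \<Rightarrow> 'a \<Rightarrow> bool) \<Rightarrow> 'a \<Rightarrow> 'a \<Rightarrow> 'r::comm_ring_1" where
  "inc_unit le a c = (if a = c then 1 else 0)"

definition invariant_subalgebra :: "('m \<Rightarrow> 'o) \<Rightarrow> ('m \<Rightarrow> 'o) \<Rightarrow> ('o \<Rightarrow> 'm) \<Rightarrow> ('m \<Rightarrow> 'm \<Rightarrow> 'm) \<Rightarrow> ('m \<Rightarrow> 'm \<Rightarrow> 'r::comm_ring_1) set" where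
  "invariant_subalgebra s t e cmp =
     {\<alpha> \<in> incidence_algebra (mle s t cmp). \<forall>f g. t f = s g \<longrightarrow> \<alpha> f (cmp g f) = \<alpha> (e (t f)) g}"

text \<open>The map \<beta> \<mapsto> \<beta>-hat with \<beta>-hat[f, h f] = \<beta>(h) (h unique by right cancellativity).\<close>
definition hat :: "('m \<Rightarrow> 'o) \<Rightarrow> ('m \<Rightarrow> 'o) \<Rightarrow> ('m \<Rightarrow> 'm \<Rightarrow> 'm) \<Rightarrow> ('m \<Rightarrow> 'r::comm_ring_1) \<Rightarrow> 'm \<Rightarrow> 'm \<Rightarrow> 'r" where
  "hat s t cmp \<beta> f g = (if mle s t cmp f g then \<beta> (THE h. t f = s h \<and> g = cmp h f) else 0)"

end

theory Submission
  imports Defs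
begin

primrec altl :: "'a \<Rightarrow> 'a \<Rightarrow> nat \<Rightarrow> 'a list" where
  "altl h k 0 = [h, k]"
| "altl h k (Suc n) = h # k # altl h k n"

lemma altl_len: "length (altl h k n) = 2 * n + 2"
  by (induction n) auto

lemma altl_set: "set (altl h k n) = {h, k}"
  by (induction n) auto

lemma altl_hd: "\<exists>r. altl h k n = h # k # r"
  by (cases n) auto

lemma composable_Cons2:
  "composable_list s t (x # y # xs) \<longleftrightarrow> t x = s y \<and> composable_list s t (y # xs)"
proof
  assume a: "composable_list s t (x # y # xs)"
  have "t x = s y" using a[unfolded composable_list_def, rule_format, of 0] by simp
  moreover have "composable_list s t (y # xs)"
    unfolding composable_list_def
  proof (intro allI impI)
    fix i assume "Suc i < length (y # xs)"
    then show "t ((y # xs) ! i) = s ((y # xs) ! Suc i)"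
      using a[unfolded composable_list_def, rule_format, of "Suc i"] by simp
  qed
  ultimately show "t x = s y \<and> composable_list s t (y # xs)" by simp
next
  assume a: "t x = s y \<and> composable_list s t (y # xs)"
  show "composable_list s t (x # y # xs)"
    unfolding composable_list_def
  proof (intro allI impI)
    fix i assume i: "Suc i < length (x # y # xs)"
    show "t ((x # y # xs) ! i) = s ((x # y # xs) ! Suc i)"
    proof (cases i)
      case 0 then show ?thesis using a by simp
    next
      case (Suc j)
      then show ?thesis using a i unfolding composable_list_def by auto
    qed
  qed
qed

lemma altl_comp:
  assumes "t h = s k" "t k = s h"
  shows "composable_list s t (altl h k n)"
proof (induction n)
  case 0 then show ?case using assms by (simp add: composable_Cons2 composable_list_def)
next
  case (Suc n)
  obtain r where r: "altl h k n = h # k # r" using altl_hd by metis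
  show ?case using Suc assms by (simp add: composable_Cons2 r)
qed

locale rcm =
  fixes s t :: "'m \<Rightarrow> 'o" and e :: "'o \<Rightarrow> 'm" and cmp :: "'m \<Rightarrow> 'm \<Rightarrow> 'm"
  assumes cat: "category s t e cmp" and rc: "right_cancellative s t cmp"
begin

lemma se[simp]: "s (e x) = x" and te[simp]: "t (e x) = x"
  using cat unfolding category_def by auto
lemma scmp[simp]: "t f = s g \<Longrightarrow> s (cmp g f) = s f"
  using cat unfolding category_def by auto
lemma tcmp[simp]: "t f = s g \<Longrightarrow> t (cmp g f) = t g"
  using cat unfolding category_def by auto
lemma idl[simp]: "cmp (e (t f)) f = f" and idr[simp]: "cmp f (e (s f)) = f"
  using cat unfolding category_def by auto
lemma assoc: "t f = s g \<Longrightarrow> t g = s h \<Longrightarrow> cmp h (cmp g f) = cmp (cmp h g) f"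
  using cat unfolding category_def by auto
lemma canc: "t f = s g \<Longrightarrow> t f = s h \<Longrightarrow> cmp g f = cmp h f \<Longrightarrow> g = h"
  using rc unfolding right_cancellative_def by blast

lemma the_h: "t f = s h \<Longrightarrow> (THE h'. t f = s h' \<and> cmp h f = cmp h' f) = h"
  apply (rule the_equality)
   apply simp
  using canc by metis

lemma hat_eq: "t f = s h \<Longrightarrow> hat s t cmp \<beta> f (cmp h f) = \<beta> h"
  unfolding hat_def mle_def using the_h by auto

lemma hat_off: "\<not> mle s t cmp f g \<Longrightarrow> hat s t cmp \<beta> f g = 0"
  unfolding hat_def by auto

lemma mle_refl: "mle s t cmp f f"
  unfolding mle_def by (rule exI[of _ "e (t f)"]) simp

lemma mle_trans: "mle s t cmp f g \<Longrightarrow> mle s t cmp g h \<Longrightarrow> mle s t cmp f h"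
proof -
  assume "mle s t cmp f g" "mle s t cmp g h"
  then obtain a b where "t f = s a" "g = cmp a f" "t g = s b" "h = cmp b g"
    unfolding mle_def by blast
  then show ?thesis unfolding mle_def
    by (intro exI[of _ "cmp b a"]) (simp add: assoc)
qed

lemma altl_comp_list:
  assumes "t h = s k" "cmp k h = e x" "s h = x"
  shows "comp_list cmp (e x # altl h k n) = e x"
proof (induction n)
  case 0
  have "cmp h (e x) = h" using idr[of h] assms by simp
  then show ?case using assms by simp
next
  case (Suc n)
  have "cmp h (e x) = h" using idr[of h] assms by simp
  then show ?case using assms Suc by simp
qed

lemma altl_comp_list2:
  assumes "t h = s k" "cmp k h = e x" "s h = x"
  shows "comp_list cmp (altl h k n) = e x"
  using assms altl_comp_list[OF assms] by (cases n) auto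

lemma inv_id:
  assumes hk: "t h = s k" and kh: "cmp k h = e x"
    and fin: "finite (proper_decomps s t e cmp (e x))"
  shows "is_identity s e h"
proof (rule ccontr)
  assume nh: "\<not> is_identity s e h"
  have x: "s h = x" using scmp[OF hk] kh by (metis se)
  have tk: "t k = s h" using tcmp[OF hk] kh x by (metis te)
  have nk: "\<not> is_identity s e k"
  proof
    assume "is_identity s e k"
    then obtain y where y: "k = e y" unfolding is_identity_def by blast
    then have "y = t h" using hk by simp
    then have "cmp k h = h" using y by simp
    then show False using nh kh unfolding is_identity_def by auto
  qed
  have "range (altl h k) \<subseteq> proper_decomps s t e cmp (e x)"
  proof
    fix l assume "l \<in> range (altl h k)"
    then obtain n where l: "l = altl h k n" by blast
    show "l \<in> proper_decomps s t e cmp (e x)"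
      unfolding proper_decomps_def l
      using altl_comp_list2[OF hk kh x] altl_comp[OF hk tk] altl_set[of h k n] altl_len[of h k n] nh nk
      by auto
  qed
  moreover have "inj (altl h k)"
    by (rule injI) (metis altl_len add_right_cancel mult_left_cancel zero_neq_numeral)
  then have "infinite (range (altl h k))"
    using finite_imageD infinite_UNIV_nat by blast
  ultimately show False using fin finite_subset by blast
qed

lemma mle_antisym:
  assumes fin: "\<forall>f. finite (proper_decomps s t e cmp f)"
    and fg: "mle s t cmp f g" and gf: "mle s t cmp g f"
  shows "f = g"
proof -
  obtain h where h: "t f = s h" "g = cmp h f" using fg unfolding mle_def by blast
  obtain k where k: "t g = s k" "f = cmp k g" using gf unfolding mle_def by blast
  have tg: "t g = t h" using h by simp
  have hk: "t h = s k" using k tg by simp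
  have "cmp (cmp k h) f = cmp k (cmp h f)" using assoc[OF h(1) hk] by simp
  also have "\<dots> = f" by (simp only: h(2)[symmetric] k(2)[symmetric])
  also have "\<dots> = cmp (e (t f)) f" by (rule idl[symmetric])
  finally have "cmp (cmp k h) f = cmp (e (t f)) f" .
  then have kh: "cmp k h = e (t f)"
    using canc[of f "cmp k h" "e (t f)"] h hk by simp
  have "is_identity s e h" using inv_id[OF hk kh] fin by blast
  then obtain y where hy: "h = e y" unfolding is_identity_def by blast
  then have "y = t f" using h(1) by simp
  then have "g = cmp (e (t f)) f" using h(2) hy by simp
  then show ?thesis by (simp only: idl)
qed

lemma interval_finite:
  assumes fin: "\<forall>f. finite (proper_decomps s t e cmp f)"
  shows "finite {b. mle s t cmp a b \<and> mle s t cmp b c}"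
proof (cases "mle s t cmp a c")
  case False
  then have "{b. mle s t cmp a b \<and> mle s t cmp b c} = {}" using mle_trans by blast
  then show ?thesis by (metis finite.emptyI)
next
  case True
  then obtain g where g: "t a = s g" "c = cmp g a" unfolding mle_def by blast
  have "{b. mle s t cmp a b \<and> mle s t cmp b c}
      \<subseteq> {a, c} \<union> (\<lambda>fs. cmp (hd fs) a) ` proper_decomps s t e cmp g"
  proof
    fix b assume "b \<in> {b. mle s t cmp a b \<and> mle s t cmp b c}"
    then obtain h k where h: "t a = s h" "b = cmp h a" and k: "t b = s k" "c = cmp k b"
      unfolding mle_def by blast
    have hk: "t h = s k" using h(2) k(1) tcmp[OF h(1)] by simp
    have "cmp (cmp k h) a = cmp k (cmp h a)" using assoc[OF h(1) hk] by simp
    also have "\<dots> = cmp g a" by (simp only: h(2)[symmetric] k(2)[symmetric] g(2)[symmetric])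
    finally have "cmp (cmp k h) a = cmp g a" .
    then have kh: "cmp k h = g" using canc[of a "cmp k h" g] h hk g by simp
    show "b \<in> {a, c} \<union> (\<lambda>fs. cmp (hd fs) a) ` proper_decomps s t e cmp g"
    proof (cases "is_identity s e h")
      case True
      then obtain y where "h = e y" unfolding is_identity_def by blast
      then have "b = a" using h idl se by metis
      then show ?thesis by simp
    next
      case nh: False
      show ?thesis
      proof (cases "is_identity s e k")
        case True
        then obtain y where ky: "k = e y" unfolding is_identity_def by blast
        then have "y = t b" using k(1) by simp
        then have kt: "k = e (t b)" using ky by simp
        have "c = cmp (e (t b)) b" using k(2) kt by simp
        then have "b = c" by (simp only: idl)
        then show ?thesis by simp
      next
        case False
        have "[h, k] \<in> proper_decomps s t e cmp g"
          unfolding proper_decomps_def using nh False hk kh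
          by (auto simp: composable_list_def)
        then show ?thesis using h by force
      qed
    qed
  qed
  moreover have "finite ({a, c} \<union> (\<lambda>fs. cmp (hd fs) a) ` proper_decomps s t e cmp g)"
    using fin by simp
  ultimately show ?thesis using finite_subset by blast
qed

lemma hat_bij: "bij_betw (hat s t cmp :: ('m \<Rightarrow> 'r::comm_ring_1) \<Rightarrow> _) UNIV (invariant_subalgebra s t e cmp)"
  unfolding bij_betw_def
proof (intro conjI)
  show "inj (hat s t cmp :: ('m \<Rightarrow> 'r::comm_ring_1) \<Rightarrow> _)"
  proof (rule injI)
    fix \<alpha> \<beta> :: "'m \<Rightarrow> 'r" assume eq: "hat s t cmp \<alpha> = hat s t cmp \<beta>"
    show "\<alpha> = \<beta>"
    proof
      fix h
      have "hat s t cmp \<alpha> (e (s h)) (cmp h (e (s h))) = hat s t cmp \<beta> (e (s h)) (cmp h (e (s h)))"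
        using eq by simp
      moreover have "\<And>\<gamma>::'m \<Rightarrow> 'r. hat s t cmp \<gamma> (e (s h)) (cmp h (e (s h))) = \<gamma> h"
        using hat_eq[of "e (s h)" h] by simp
      ultimately show "\<alpha> h = \<beta> h" by metis
    qed
  qed
  show "range (hat s t cmp :: ('m \<Rightarrow> 'r::comm_ring_1) \<Rightarrow> _) = invariant_subalgebra s t e cmp"
  proof
    show "range (hat s t cmp :: ('m \<Rightarrow> 'r::comm_ring_1) \<Rightarrow> _) \<subseteq> invariant_subalgebra s t e cmp"
    proof clarify
      fix \<beta> :: "'m \<Rightarrow> 'r"
      have "\<forall>f g. t f = s g \<longrightarrow> hat s t cmp \<beta> f (cmp g f) = hat s t cmp \<beta> (e (t f)) g"
      proof (intro allI impI)
        fix f g assume fg: "t f = s g"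
        have "hat s t cmp \<beta> (e (t f)) g = hat s t cmp \<beta> (e (s g)) (cmp g (e (s g)))"
          using fg by simp
        also have "\<dots> = \<beta> g" using hat_eq[of "e (s g)" g] by simp
        finally show "hat s t cmp \<beta> f (cmp g f) = hat s t cmp \<beta> (e (t f)) g"
          using hat_eq[OF fg] by simp
      qed
      then show "hat s t cmp \<beta> \<in> invariant_subalgebra s t e cmp"
        unfolding invariant_subalgebra_def incidence_algebra_def using hat_off by auto
    qed
    show "invariant_subalgebra s t e cmp \<subseteq> range (hat s t cmp :: ('m \<Rightarrow> 'r::comm_ring_1) \<Rightarrow> _)"
    proof
      fix \<alpha> :: "'m \<Rightarrow> 'm \<Rightarrow> 'r" assume a: "\<alpha> \<in> invariant_subalgebra s t e cmp"
      define \<beta> where "\<beta> h = \<alpha> (e (s h)) h" for h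
      have "hat s t cmp \<beta> = \<alpha>"
      proof (intro ext)
        fix f g
        show "hat s t cmp \<beta> f g = \<alpha> f g"
        proof (cases "mle s t cmp f g")
          case True
          then obtain h where h: "t f = s h" "g = cmp h f" unfolding mle_def by blast
          have "\<alpha> f g = \<alpha> (e (t f)) h" using a h unfolding invariant_subalgebra_def by auto
          then show ?thesis using hat_eq[OF h(1)] h unfolding \<beta>_def by simp
        next
          case False
          then show ?thesis using a hat_off
            unfolding invariant_subalgebra_def incidence_algebra_def by auto
        qed
      qed
      then show "\<alpha> \<in> range (hat s t cmp :: ('m \<Rightarrow> 'r::comm_ring_1) \<Rightarrow> _)" by blast
    qed
  qed
qed

lemma hat_conv:
  "hat s t cmp (conv s t cmp \<alpha> \<beta>) a c = inc_mult (mle s t cmp) (hat s t cmp \<alpha>) (hat s t cmp \<beta>) a c"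
proof (cases "mle s t cmp a c")
  case False
  then show ?thesis by (simp add: hat_off inc_mult_def)
next
  case True
  then obtain g where g: "t a = s g" "c = cmp g a" unfolding mle_def by blast
  let ?S = "{(f1, f2). t f1 = s f2 \<and> cmp f2 f1 = g}"
  let ?I = "{b. mle s t cmp a b \<and> mle s t cmp b c}"
  have bij: "bij_betw (\<lambda>(f1, f2). cmp f1 a) ?S ?I"
  proof (rule bij_betw_imageI)
    show "inj_on (\<lambda>(f1, f2). cmp f1 a) ?S"
    proof (rule inj_onI, clarify)
      fix f1 f2 f1' f2'
      assume A: "t f1 = s f2" "g = cmp f2 f1" "t f1' = s f2'" "cmp f2' f1' = cmp f2 f1"
        "cmp f1 a = cmp f1' a"
      have "s (cmp f2 f1) = s f1" using scmp[OF A(1)] .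
      then have s1: "t a = s f1" using A(2) g(1) by simp
      have "s (cmp f2' f1') = s f1'" using scmp[OF A(3)] .
      then have s1': "t a = s f1'" using A(4) A(2) g(1) by simp
      have e1: "f1 = f1'" using canc[OF s1 s1' A(5)] .
      have "cmp f2 f1 = cmp f2' f1" using A(4) e1 by simp
      then show "f1 = f1' \<and> f2 = f2'" using canc[OF A(1)] A(3) e1 by simp
    qed
    show "(\<lambda>(f1, f2). cmp f1 a) ` ?S = ?I"
    proof
      show "(\<lambda>(f1, f2). cmp f1 a) ` ?S \<subseteq> ?I"
      proof clarify
        fix f1 f2 assume A: "t f1 = s f2" "g = cmp f2 f1"
        have "s (cmp f2 f1) = s f1" using scmp[OF A(1)] .
        then have s1: "s f1 = t a" using A(2) g(1) by simp
        have "c = cmp (cmp f2 f1) a" by (simp only: g(2) A(2))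
    also have "\<dots> = cmp f2 (cmp f1 a)" using assoc[of a f1 f2] s1 A(1) by simp
    finally have "c = cmp f2 (cmp f1 a)" .
        moreover have ta: "t a = s f1" using s1 by simp
        moreover have "t (cmp f1 a) = s f2" using tcmp[OF ta] A(1) by simp
        ultimately show "mle s t cmp a (cmp f1 a) \<and> mle s t cmp (cmp f1 a) c"
          unfolding mle_def by blast
      qed
      show "?I \<subseteq> (\<lambda>(f1, f2). cmp f1 a) ` ?S"
      proof
        fix b assume "b \<in> ?I"
        then obtain h k where h: "t a = s h" "b = cmp h a" and k: "t b = s k" "c = cmp k b"
          unfolding mle_def by blast
        have hk: "t h = s k" using h(2) k(1) tcmp[OF h(1)] by simp
        have "cmp (cmp k h) a = cmp k (cmp h a)" using assoc[OF h(1) hk] by simp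
    also have "\<dots> = cmp g a" by (simp only: h(2)[symmetric] k(2)[symmetric] g(2)[symmetric])
    finally have "cmp (cmp k h) a = cmp g a" .
        then have kh: "cmp k h = g" using canc[of a "cmp k h" g] h hk g by simp
        show "b \<in> (\<lambda>(f1, f2). cmp f1 a) ` ?S"
          using hk kh h by (intro image_eqI[of _ _ "(h, k)"]) auto
      qed
    qed
  qed
  have "hat s t cmp (conv s t cmp \<alpha> \<beta>) a c = conv s t cmp \<alpha> \<beta> g"
    using hat_eq[OF g(1)] g by simp
  also have "\<dots> = (\<Sum>(f1, f2) \<in> ?S. hat s t cmp \<alpha> a (cmp f1 a) * hat s t cmp \<beta> (cmp f1 a) c)"
    unfolding conv_def
  proof (rule sum.cong[OF refl], clarify)
    fix f1 f2 assume A: "t f1 = s f2" "g = cmp f2 f1"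
    have s1: "s f1 = t a" using A g scmp by metis
    have "c = cmp (cmp f2 f1) a" by (simp only: g(2) A(2))
    also have "\<dots> = cmp f2 (cmp f1 a)" using assoc[of a f1 f2] s1 A(1) by simp
    finally have "c = cmp f2 (cmp f1 a)" .
    then show "\<alpha> f1 * \<beta> f2 = hat s t cmp \<alpha> a (cmp f1 a) * hat s t cmp \<beta> (cmp f1 a) c"
    proof -
      have ta: "t a = s f1" using s1 by simp
      have tb: "t (cmp f1 a) = s f2" using tcmp[OF ta] A(1) by simp
      show ?thesis using hat_eq[OF ta, of \<alpha>] hat_eq[OF tb, of \<beta>] \<open>c = cmp f2 (cmp f1 a)\<close> by simp
    qed
  qed
  also have "\<dots> = (\<Sum>b \<in> ?I. hat s t cmp \<alpha> a b * hat s t cmp \<beta> b c)"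
    using sum.reindex_bij_betw[OF bij, of "\<lambda>b. hat s t cmp \<alpha> a b * hat s t cmp \<beta> b c"]
    by (simp add: case_prod_unfold)
  finally show ?thesis using True by (simp add: inc_mult_def)
qed

lemma hat_unit: "hat s t cmp (conv_unit e :: 'm \<Rightarrow> 'r::comm_ring_1) a c = inc_unit (mle s t cmp) a c"
proof (cases "mle s t cmp a c")
  case False
  then have "a \<noteq> c" using mle_refl by blast
  then show ?thesis using False by (simp add: hat_off inc_unit_def)
next
  case True
  then obtain h where h: "t a = s h" "c = cmp h a" unfolding mle_def by blast
  have "hat s t cmp (conv_unit e :: 'm \<Rightarrow> 'r) a c = conv_unit e h" using hat_eq[OF h(1)] h by simp
  also have "\<dots> = (if a = c then 1 else 0)"
  proof (cases "\<exists>x. h = e x")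
    case True
    then obtain x where hx: "h = e x" by blast
    then have "x = t a" using h(1) by simp
    then have ht: "h = e (t a)" using hx by simp
    have "c = cmp (e (t a)) a" using h(2) ht by simp
    then have "c = a" by (simp only: idl)
    then show ?thesis using True by (simp add: conv_unit_def)
  next
    case False
    have "a \<noteq> c"
    proof
      assume "a = c"
      then have "cmp h a = cmp (e (t a)) a" using h(2) by (simp only: idl)
      then have "h = e (t a)" using canc[of a h "e (t a)"] h(1) by simp
      then show False using False by blast
    qed
    then show ?thesis using False by (simp add: conv_unit_def)
  qed
  finally show ?thesis by (simp add: inc_unit_def)
qed

end

theorem theorem7p4:
  fixes s t :: "'m \<Rightarrow> 'o" and e :: "'o \<Rightarrow> 'm" and cmp :: "'m \<Rightarrow> 'm \<Rightarrow> 'm"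
  assumes "moebius_category s t e cmp"
    and "right_cancellative s t cmp"
  shows "partial_order_on UNIV {(f, g). mle s t cmp f g}
    \<and> (\<forall>a c. finite {b. mle s t cmp a b \<and> mle s t cmp b c})
    \<and> bij_betw (hat s t cmp :: ('m \<Rightarrow> 'r::comm_ring_1) \<Rightarrow> _) UNIV (invariant_subalgebra s t e cmp)
    \<and> (\<forall>\<alpha> \<beta> :: 'm \<Rightarrow> 'r. hat s t cmp (conv s t cmp \<alpha> \<beta>)
           = inc_mult (mle s t cmp) (hat s t cmp \<alpha>) (hat s t cmp \<beta>))
    \<and> (\<forall>\<alpha> \<beta> :: 'm \<Rightarrow> 'r. hat s t cmp (\<lambda>f. \<alpha> f + \<beta> f) = (\<lambda>a c. hat s t cmp \<alpha> a c + hat s t cmp \<beta> a c))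
    \<and> (\<forall>(r::'r) (\<alpha> :: 'm \<Rightarrow> 'r). hat s t cmp (\<lambda>f. r * \<alpha> f) = (\<lambda>a c. r * hat s t cmp \<alpha> a c))
    \<and> hat s t cmp (conv_unit e :: 'm \<Rightarrow> 'r) = inc_unit (mle s t cmp)"
proof -
  interpret rcm s t e cmp
    using assms unfolding moebius_category_def by unfold_locales auto
  have fin: "\<forall>f. finite (proper_decomps s t e cmp f)"
    using assms unfolding moebius_category_def by auto
  have P1: "partial_order_on UNIV {(f, g). mle s t cmp f g}"
    unfolding partial_order_on_def preorder_on_def refl_on_def trans_def antisym_def
    using mle_refl mle_trans mle_antisym[OF fin] by blast
  have P2: "\<forall>a c. finite {b. mle s t cmp a b \<and> mle s t cmp b c}"
    using interval_finite[OF fin] by blast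
  have P3: "bij_betw (hat s t cmp :: ('m \<Rightarrow> 'r::comm_ring_1) \<Rightarrow> _) UNIV (invariant_subalgebra s t e cmp)"
    by (rule hat_bij)
  have P4: "\<forall>\<alpha> \<beta> :: 'm \<Rightarrow> 'r. hat s t cmp (conv s t cmp \<alpha> \<beta>)
           = inc_mult (mle s t cmp) (hat s t cmp \<alpha>) (hat s t cmp \<beta>)"
    using hat_conv by blast
  have P5: "\<forall>\<alpha> \<beta> :: 'm \<Rightarrow> 'r. hat s t cmp (\<lambda>f. \<alpha> f + \<beta> f) = (\<lambda>a c. hat s t cmp \<alpha> a c + hat s t cmp \<beta> a c)"
    by (auto simp: hat_def fun_eq_iff)
  have P6: "\<forall>(r::'r) (\<alpha> :: 'm \<Rightarrow> 'r). hat s t cmp (\<lambda>f. r * \<alpha> f) = (\<lambda>a c. r * hat s t cmp \<alpha> a c)"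
    by (auto simp: hat_def fun_eq_iff)
  have P7: "hat s t cmp (conv_unit e :: 'm \<Rightarrow> 'r) = inc_unit (mle s t cmp)"
    using hat_unit by blast
  show ?thesis using P1 P2 P3 P4 P5 P6 P7 by blast
qed

end
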